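(* Suppose $D$ is the class of transvections in the unitary group $\mathrm{SU}_{n+1}(2)$, $n\ge2$. Then $\mathcal{A}(D)/\mathcal{V}(D)$ is isomorphic to the Lie algebra of type ${}^2A_n(2)$ modulo its center.
   Context: For a class $D$ of $3$-transpositions generating a group (involutions with $o(de)\in\{1,2,3\}$): lines are triples $\{d,e,d^e\}$ with $d,e$ non-commuting; $\mathcal{A}(D)$ is the $\mathbb{F}_2$-space with basis $D$ and bilinear product $d*e=d+e+f$ if $\{d,e,f\}$ is a line, $0$ otherwise; the form $\langle d,e\rangle$ is $1$ if $d,e$ do not commute and $0$ otherwise; $\mathcal{V}(D)$ is its radical. The Lie algebra of type ${}^2A_n(2)$ is the $\mathbb{F}_2$-Lie algebra $\mathfrak g_2$ generated, inside the split simple Lie algebra $\mathfrak g$ of type $A_n$ over $\mathbb{F}_4$ with Chevalley basis $\{\mathfrak x_\alpha\}\cup\{[\mathfrak x_\alpha,\mathfrak x_{-\alpha}]\}$, by the elements $\omega\mathfrak x_\alpha+\bar\omega\mathfrak x_{-\alpha}+\omega\bar\omega[\mathfrak x_\alpha,\mathfrak x_{-\alpha}]$ ($\alpha$ a root, $\omega\in\mathbb{F}_4^*$, $\bar\omega=\omega^2$); equivalently the unitary Lie algebra $\mathfrak{su}_{n+1}(2)$. *)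

theory Defs
  imports "HOL-Library.Z2" "Jordan_Normal_Form.Determinant"
begin

text \<open>Elements 0, 1, w, w2 where w^2 = w + 1 (so w2 = w^2 = w + 1).\<close>

datatype gf4 = G0 | G1 | Gw | Gw2

instantiation gf4 :: field
begin

fun plus_gf4 :: "gf4 \<Rightarrow> gf4 \<Rightarrow> gf4" where
  "plus_gf4 G0 y = y"
| "plus_gf4 x G0 = x"
| "plus_gf4 G1 G1 = G0" | "plus_gf4 G1 Gw = Gw2" | "plus_gf4 G1 Gw2 = Gw"
| "plus_gf4 Gw G1 = Gw2" | "plus_gf4 Gw Gw = G0" | "plus_gf4 Gw Gw2 = G1"
| "plus_gf4 Gw2 G1 = Gw" | "plus_gf4 Gw2 Gw = G1" | "plus_gf4 Gw2 Gw2 = G0"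

fun times_gf4 :: "gf4 \<Rightarrow> gf4 \<Rightarrow> gf4" where
  "times_gf4 G0 y = G0"
| "times_gf4 x G0 = G0"
| "times_gf4 G1 y = y"
| "times_gf4 x G1 = x"
| "times_gf4 Gw Gw = Gw2" | "times_gf4 Gw Gw2 = G1"
| "times_gf4 Gw2 Gw = G1" | "times_gf4 Gw2 Gw2 = Gw"

fun inverse_gf4 :: "gf4 \<Rightarrow> gf4" where
  "inverse_gf4 G0 = G0" | "inverse_gf4 G1 = G1"
| "inverse_gf4 Gw = Gw2" | "inverse_gf4 Gw2 = Gw"

definition zero_gf4 :: gf4 where "zero_gf4 = G0"
definition one_gf4 :: gf4 where "one_gf4 = G1"
definition uminus_gf4 :: "gf4 \<Rightarrow> gf4" where "uminus_gf4 x = x"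
definition minus_gf4 :: "gf4 \<Rightarrow> gf4 \<Rightarrow> gf4" where "minus_gf4 x y = x + y"
definition divide_gf4 :: "gf4 \<Rightarrow> gf4 \<Rightarrow> gf4" where "divide_gf4 x y = x * inverse y"

instance
proof
  fix a b c :: gf4
  show "a + b + c = a + (b + c)" by (cases a; cases b; cases c) simp_all
  show "a + b = b + a" by (cases a; cases b) simp_all
  show "0 + a = a" by (simp add: zero_gf4_def)
  show "- a + a = 0" by (cases a) (simp_all add: uminus_gf4_def zero_gf4_def)
  show "a - b = a + - b" by (simp add: minus_gf4_def uminus_gf4_def)
  show "a * b * c = a * (b * c)" by (cases a; cases b; cases c) simp_all
  show "a * b = b * a" by (cases a; cases b) simp_all
  show "1 * a = a" by (cases a) (simp_all add: one_gf4_def)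
  show "(a + b) * c = a * c + b * c" by (cases a; cases b; cases c) simp_all
  show "(0::gf4) \<noteq> 1" by (simp add: zero_gf4_def one_gf4_def)
  show "a \<noteq> 0 \<Longrightarrow> inverse a * a = 1" by (cases a) (simp_all add: zero_gf4_def one_gf4_def)
  show "a div b = a * inverse b" by (simp add: divide_gf4_def)
  show "inverse (0::gf4) = 0" by (simp add: zero_gf4_def)
qed

end

definition gf4_conj :: "gf4 \<Rightarrow> gf4" where
  "gf4_conj x = x * x"

text \<open>Conjugate transpose, w.r.t. the standard non-degenerate hermitian form
  h(x,y) = sum_i x_i * conj(y_i) on F_4^(n+1).\<close>
definition adj_mat :: "gf4 mat \<Rightarrow> gf4 mat" where
  "adj_mat A = transpose_mat (map_mat gf4_conj A)"

definition SU :: "nat \<Rightarrow> gf4 mat set" where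
  "SU n = {A \<in> carrier_mat (n+1) (n+1). A * adj_mat A = 1\<^sub>m (n+1) \<and> det A = 1}"

definition outer_prod :: "gf4 vec \<Rightarrow> gf4 vec \<Rightarrow> gf4 mat" where
  "outer_prod v w = mat (dim_vec v) (dim_vec w) (\<lambda>(i,j). v $ i * w $ j)"

definition is_transvection :: "nat \<Rightarrow> gf4 mat \<Rightarrow> bool" where
  "is_transvection N A \<longleftrightarrow> (\<exists>v w. v \<in> carrier_vec N \<and> w \<in> carrier_vec N \<and>
      v \<noteq> 0\<^sub>v N \<and> w \<noteq> 0\<^sub>v N \<and> w \<bullet> v = 0 \<and> A = 1\<^sub>m N + outer_prod v w)"

definition transvD :: "nat \<Rightarrow> gf4 mat set" where
  "transvD n = {A \<in> SU n. is_transvection (n+1) A}"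

text \<open>Elements of A(D): F_2-valued functions on group elements supported in D
  (D is finite here), i.e. formal F_2-combinations of elements of D.\<close>
definition Aspace :: "'g set \<Rightarrow> ('g \<Rightarrow> bit) set" where
  "Aspace D = {x. \<forall>g. g \<notin> D \<longrightarrow> x g = 0}"

definition Aadd :: "('g \<Rightarrow> bit) \<Rightarrow> ('g \<Rightarrow> bit) \<Rightarrow> ('g \<Rightarrow> bit)" where
  "Aadd x y = (\<lambda>g. x g + y g)"

text \<open>Product of basis elements d, e: d + e + d^e if d, e do not commute
  (then {d, e, d^e} is a line, d^e = e d e as e is an involution), else 0.\<close>
definition Abasis_prod :: "'g::times \<Rightarrow> 'g \<Rightarrow> ('g \<Rightarrow> bit)" where
  "Abasis_prod d e = (if d * e \<noteq> e * d
      then (\<lambda>g. of_bool (g = d) + of_bool (g = e) + of_bool (g = e * d * e))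
      else (\<lambda>g. 0))"

definition Amult :: "'g::times set \<Rightarrow> ('g \<Rightarrow> bit) \<Rightarrow> ('g \<Rightarrow> bit) \<Rightarrow> ('g \<Rightarrow> bit)" where
  "Amult D x y = (\<lambda>g. \<Sum>d\<in>D. \<Sum>e\<in>D. x d * y e * Abasis_prod d e g)"

definition Aform :: "'g::times set \<Rightarrow> ('g \<Rightarrow> bit) \<Rightarrow> ('g \<Rightarrow> bit) \<Rightarrow> bit" where
  "Aform D x y = (\<Sum>d\<in>D. \<Sum>e\<in>D. x d * y e * of_bool (d * e \<noteq> e * d))"

definition Arad :: "'g::times set \<Rightarrow> ('g \<Rightarrow> bit) set" where
  "Arad D = {x \<in> Aspace D. \<forall>y \<in> Aspace D. Aform D x y = 0}"

definition lie_bracket :: "gf4 mat \<Rightarrow> gf4 mat \<Rightarrow> gf4 mat" where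
  "lie_bracket A B = A * B - B * A"

definition Emat :: "nat \<Rightarrow> nat \<Rightarrow> nat \<Rightarrow> gf4 mat" where
  "Emat N i j = mat N N (\<lambda>(k,l). if k = i \<and> l = j then 1 else 0)"

text \<open>Chevalley basis of the split Lie algebra of type A_n over F_4 realised in
  sl_{n+1}(F_4): x_alpha = E_ij (alpha = e_i - e_j, i \<noteq> j), x_{-alpha} = E_ji,
  [x_alpha, x_{-alpha}] = E_ii - E_jj.\<close>
definition g2_gens :: "nat \<Rightarrow> gf4 mat set" where
  "g2_gens n = {w \<cdot>\<^sub>m Emat (n+1) i j + gf4_conj w \<cdot>\<^sub>m Emat (n+1) j i
        + (w * gf4_conj w) \<cdot>\<^sub>m (Emat (n+1) i i - Emat (n+1) j j)
     | i j w. i < n+1 \<and> j < n+1 \<and> i \<noteq> j \<and> w \<noteq> 0}"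

text \<open>The F_2-Lie algebra generated by these elements (F_2-span = closure under +).\<close>
inductive_set g2 :: "nat \<Rightarrow> gf4 mat set" for n where
  gen: "x \<in> g2_gens n \<Longrightarrow> x \<in> g2 n"
| add: "x \<in> g2 n \<Longrightarrow> y \<in> g2 n \<Longrightarrow> x + y \<in> g2 n"
| brk: "x \<in> g2 n \<Longrightarrow> y \<in> g2 n \<Longrightarrow> lie_bracket x y \<in> g2 n"

definition lie_center :: "nat \<Rightarrow> gf4 mat set \<Rightarrow> gf4 mat set" where
  "lie_center N L = {z \<in> L. \<forall>y \<in> L. lie_bracket z y = 0\<^sub>m N N}"

text \<open>A/I \<cong> B/J as (non-associative) F_2-algebras, witnessed by an additive
  (= F_2-linear) map phi : A \<rightarrow> B inducing a bijective algebra map A/I \<rightarrow> B/J.\<close>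
definition alg_quot_iso ::
  "'a set \<Rightarrow> ('a \<Rightarrow> 'a \<Rightarrow> 'a) \<Rightarrow> ('a \<Rightarrow> 'a \<Rightarrow> 'a) \<Rightarrow> 'a set \<Rightarrow>
   'b set \<Rightarrow> ('b \<Rightarrow> 'b \<Rightarrow> 'b) \<Rightarrow> ('b \<Rightarrow> 'b \<Rightarrow> 'b) \<Rightarrow> 'b set \<Rightarrow> bool" where
  "alg_quot_iso A addA mulA I B addB mulB J \<longleftrightarrow>
    (\<exists>\<phi>. (\<forall>x \<in> A. \<phi> x \<in> B)
      \<and> (\<forall>x \<in> A. \<forall>y \<in> A. \<phi> (addA x y) = addB (\<phi> x) (\<phi> y))
      \<and> (\<forall>x \<in> A. \<forall>y \<in> A. \<exists>z \<in> J. \<phi> (mulA x y) = addB (mulB (\<phi> x) (\<phi> y)) z)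
      \<and> (\<forall>b \<in> B. \<exists>x \<in> A. \<exists>z \<in> J. b = addB (\<phi> x) z)
      \<and> (\<forall>x \<in> A. \<phi> x \<in> J \<longleftrightarrow> x \<in> I))"

end

theory Submission
  imports Defs
begin

lemma gf4_UNIV: "(UNIV::gf4 set) = {G0,G1,Gw,Gw2}"
  by (auto intro: gf4.exhaust)
lemma gf4_finite[simp]: "finite (UNIV::gf4 set)" by (simp add: gf4_UNIV)

lemma gf4_add_self[simp]: "(a::gf4) + a = 0"
  by (cases a) (simp_all add: zero_gf4_def)
lemma gf4_two[simp]: "(2::gf4) = 0"
  by (metis one_add_one gf4_add_self)
lemma gf4_add_self2[simp]: "(a::gf4) + (a + b) = b"
  by (metis add.assoc gf4_add_self add_0)
lemma gf4_uminus[simp]: "- (a::gf4) = a" by (simp add: uminus_gf4_def)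
lemma gf4_minus: "(a::gf4) - b = a + b" by (simp add: minus_gf4_def)
lemma conj_add[simp]: "gf4_conj (a+b) = gf4_conj a + gf4_conj b"
  by (cases a; cases b) (simp_all add: gf4_conj_def)
lemma conj_mult[simp]: "gf4_conj (a*b) = gf4_conj a * gf4_conj b"
  by (cases a; cases b) (simp_all add: gf4_conj_def)
lemma conj_conj[simp]: "gf4_conj (gf4_conj a) = a"
  by (cases a) (simp_all add: gf4_conj_def)
lemma conj_0[simp]: "gf4_conj 0 = 0" by (simp add: gf4_conj_def)
lemma conj_1[simp]: "gf4_conj 1 = 1" by (simp add: gf4_conj_def)
lemma conj_norm: "a \<noteq> 0 \<Longrightarrow> a * gf4_conj a = 1"
  by (cases a) (simp_all add: gf4_conj_def zero_gf4_def one_gf4_def)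
lemma conj_fix: "gf4_conj a = a \<Longrightarrow> a = 0 \<or> a = 1"
  by (cases a) (simp_all add: gf4_conj_def zero_gf4_def one_gf4_def)
lemma sq_one: "(a::gf4) * a = 1 \<Longrightarrow> a = 1"
  by (cases a) (simp_all add: zero_gf4_def one_gf4_def)
lemma tr_zero: "a + gf4_conj a = 0 \<Longrightarrow> Gw * a + gf4_conj (Gw * a) = 0 \<Longrightarrow> a = 0"
  by (cases a) (simp_all add: gf4_conj_def zero_gf4_def one_gf4_def)
lemma conj_sum: "gf4_conj (sum f A) = sum (\<lambda>x. gf4_conj (f x)) A"
  by (induction A rule: infinite_finite_induct) auto

lemma finite_carrier_gf4: "finite (carrier_mat N M :: gf4 mat set)"
proof -
  let ?S = "{..<N} \<times> {..<M}"
  let ?f = "\<lambda>A::gf4 mat. (\<lambda>p. if p \<in> ?S then A $$ p else G0)"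
  have inj: "inj_on ?f (carrier_mat N M)"
  proof
    fix A B assume A: "A \<in> carrier_mat N M" and B: "B \<in> carrier_mat N M" and e: "?f A = ?f B"
    show "A = B"
    proof (rule eq_matI)
      fix i j assume "i < dim_row B" "j < dim_col B"
      then show "A $$ (i,j) = B $$ (i,j)" using fun_cong[OF e, of "(i,j)"] B by auto
    qed (use A B in auto)
  qed
  have "?f ` carrier_mat N M \<subseteq> {f. \<forall>p. p \<notin> ?S \<longrightarrow> f p = G0}" by auto
  moreover have "finite {f::nat\<times>nat \<Rightarrow> gf4. \<forall>p. p \<notin> ?S \<longrightarrow> f p = G0}"
    using finite_set_of_finite_funs[of ?S "UNIV::gf4 set" G0] by (simp add: )
  ultimately show ?thesis using finite_imageD[OF _ inj] finite_subset by blast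
qed

definition su :: "nat \<Rightarrow> gf4 mat set" where
  "su N = {X \<in> carrier_mat N N. (\<forall>i<N. \<forall>j<N. X$$(j,i) = gf4_conj (X$$(i,j)))
        \<and> (\<Sum>i<N. X$$(i,i)) = 0}"

lemma suI: "X \<in> carrier_mat N N \<Longrightarrow> (\<And>i j. i<N \<Longrightarrow> j<N \<Longrightarrow> X$$(j,i) = gf4_conj (X$$(i,j)))
   \<Longrightarrow> (\<Sum>i<N. X$$(i,i)) = 0 \<Longrightarrow> X \<in> su N"
  unfolding su_def by blast

lemma suD: assumes "X \<in> su N"
  shows "X \<in> carrier_mat N N" "\<And>i j. i<N \<Longrightarrow> j<N \<Longrightarrow> X$$(j,i) = gf4_conj (X$$(i,j))"
    "(\<Sum>i<N. X$$(i,i)) = 0"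
  using assms unfolding su_def by blast+

lemma su_conj: "X \<in> su N \<Longrightarrow> i<N \<Longrightarrow> j<N \<Longrightarrow> gf4_conj (X$$(i,j)) = X$$(j,i)"
  using suD(2) by metis

lemma su_add: assumes "X \<in> su N" "Y \<in> su N" shows "X + Y \<in> su N"
proof (rule suI)
  show "X + Y \<in> carrier_mat N N" using suD(1)[OF assms(1)] suD(1)[OF assms(2)] by simp
  fix i j assume "i<N" "j<N"
  then show "(X+Y)$$(j,i) = gf4_conj ((X+Y)$$(i,j))"
    using suD(1)[OF assms(1)] suD(1)[OF assms(2)] su_conj[OF assms(1)] su_conj[OF assms(2)] by auto
next
  have "(\<Sum>i<N. (X+Y)$$(i,i)) = (\<Sum>i<N. X$$(i,i) + Y$$(i,i))"
    using suD(1)[OF assms(1)] suD(1)[OF assms(2)] by (intro sum.cong) auto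
  also have "\<dots> = 0" using suD(3)[OF assms(1)] suD(3)[OF assms(2)] by (simp add: sum.distrib)
  finally show "(\<Sum>i<N. (X+Y)$$(i,i)) = 0" .
qed

lemma mult_entry: "A \<in> carrier_mat N N \<Longrightarrow> B \<in> carrier_mat N N \<Longrightarrow> i < N \<Longrightarrow> j < N \<Longrightarrow>
   (A * B) $$ (i,j) = (\<Sum>k<N. A$$(i,k) * B$$(k,j))"
  by (simp add: index_mult_mat scalar_prod_def atLeast0LessThan)

lemma su_bracket: assumes "X \<in> su N" "Y \<in> su N" shows "lie_bracket X Y \<in> su N"
proof -
  note X = suD[OF assms(1)] and Y = suD[OF assms(2)]
  have c: "X * Y \<in> carrier_mat N N" "Y * X \<in> carrier_mat N N" using X(1) Y(1) by auto
  have e: "lie_bracket X Y $$ (i,j) = (\<Sum>k<N. X$$(i,k) * Y$$(k,j)) + (\<Sum>k<N. Y$$(i,k) * X$$(k,j))"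
    if "i<N" "j<N" for i j
    using that c X(1) Y(1) by (simp add: lie_bracket_def gf4_minus scalar_prod_def atLeast0LessThan)
  show ?thesis
  proof (rule suI)
    show "lie_bracket X Y \<in> carrier_mat N N" using c unfolding lie_bracket_def by (metis minus_carrier_mat)
    fix i j assume ij: "i<N" "j<N"
    show "lie_bracket X Y $$ (j,i) = gf4_conj (lie_bracket X Y $$ (i,j))"
      unfolding e[OF ij] e[OF ij(2,1)] conj_add conj_sum conj_mult
      using su_conj[OF assms(1)] su_conj[OF assms(2)] ij by (simp add: ac_simps)
  next
    have "(\<Sum>i<N. lie_bracket X Y $$ (i,i)) = (\<Sum>i<N. \<Sum>k<N. X$$(i,k) * Y$$(k,i)) + (\<Sum>i<N. \<Sum>k<N. Y$$(i,k) * X$$(k,i))"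
      by (simp add: e sum.distrib)
    also have "(\<Sum>i<N. \<Sum>k<N. Y$$(i,k) * X$$(k,i)) = (\<Sum>i<N. \<Sum>k<N. X$$(i,k) * Y$$(k,i))"
      by (subst sum.swap) (simp add: mult.commute)
    finally show "(\<Sum>i<N. lie_bracket X Y $$ (i,i)) = 0" by simp
  qed
qed


definition Gm :: "nat \<Rightarrow> nat \<Rightarrow> nat \<Rightarrow> gf4 \<Rightarrow> gf4 mat" where
  "Gm N i j w = w \<cdot>\<^sub>m Emat N i j + gf4_conj w \<cdot>\<^sub>m Emat N j i
        + (w * gf4_conj w) \<cdot>\<^sub>m (Emat N i i - Emat N j j)"

lemma g2_gens_Gm: "g2_gens n = {Gm (n+1) i j w | i j w. i<n+1 \<and> j<n+1 \<and> i\<noteq>j \<and> w\<noteq>0}"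
  by (simp add: g2_gens_def Gm_def)

lemma Gm_carrier[simp]: "Gm N i j w \<in> carrier_mat N N"
  unfolding Gm_def Emat_def by (intro add_carrier_mat smult_carrier_mat minus_carrier_mat mat_carrier)

lemma Gm_dim[simp]: "dim_row (Gm N i j w) = N" "dim_col (Gm N i j w) = N"
  using Gm_carrier[of N i j w] carrier_matD by metis+

lemma Gm_entry: assumes "i\<noteq>j" "w\<noteq>0" "k<N" "l<N"
  shows "Gm N i j w $$ (k,l) = (if k=i \<and> l=j then w else if k=j \<and> l=i then gf4_conj w
            else if k=l \<and> (k=i \<or> k=j) then 1 else 0)"
  using assms conj_norm[OF assms(2)] by (auto simp: Gm_def Emat_def gf4_minus)

lemma sum_two: "i \<noteq> j \<Longrightarrow> i < (N::nat) \<Longrightarrow> j < N \<Longrightarrow> (\<Sum>k<N. if k=i \<or> k=j then (1::gf4) else 0) = 0"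
proof -
  assume a: "i \<noteq> j" "i < N" "j < N"
  have "(\<Sum>k<N. if k=i \<or> k=j then (1::gf4) else 0) = (\<Sum>k\<in>{i,j}. 1)"
    using a by (intro sum.mono_neutral_cong_right; auto)
  also have "\<dots> = 0" using a by simp
  finally show ?thesis .
qed

lemma Gm_su: assumes "i\<noteq>j" "w\<noteq>0" "i<N" "j<N" shows "Gm N i j w \<in> su N"
proof (rule suI)
  fix k l assume "k<N" "l<N"
  then show "Gm N i j w $$ (l,k) = gf4_conj (Gm N i j w $$ (k,l))"
    using assms by (auto simp: Gm_entry)
next
  have "(\<Sum>k<N. Gm N i j w $$ (k,k)) = (\<Sum>k<N. if k=i \<or> k=j then (1::gf4) else 0)"
    using assms by (intro sum.cong) (auto simp: Gm_entry)
  then show "(\<Sum>k<N. Gm N i j w $$ (k,k)) = 0" using sum_two assms by simp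
qed simp

lemma g2_su: "x \<in> g2 n \<Longrightarrow> x \<in> su (n+1)"
proof (induction rule: g2.induct)
  case (gen x) then show ?case by (auto simp: g2_gens_Gm intro: Gm_su)
next
  case (add x y) then show ?case using su_add by blast
next
  case (brk x y) then show ?case using su_bracket by blast
qed

definition Qm :: "nat \<Rightarrow> nat \<Rightarrow> nat \<Rightarrow> gf4 \<Rightarrow> gf4 mat" where
  "Qm N i j c = mat N N (\<lambda>(k,l). if k=i \<and> l=j then c else if k=j \<and> l=i then gf4_conj c else 0)"
definition Dm :: "nat \<Rightarrow> nat \<Rightarrow> nat \<Rightarrow> gf4 mat" where
  "Dm N i j = mat N N (\<lambda>(k,l). if k=l \<and> (k=i \<or> k=j) then 1 else 0)"

lemma cw_sum: "c*Gw + c*Gw2 = (c::gf4)" by (cases c) (simp_all add: zero_gf4_def)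
lemma ccw_sum: "gf4_conj c * gf4_conj Gw + gf4_conj c * gf4_conj Gw2 = gf4_conj (c::gf4)"
  by (cases c) (simp_all add: zero_gf4_def gf4_conj_def)
lemma cw_nz: "c \<noteq> 0 \<Longrightarrow> c*Gw \<noteq> (0::gf4)" "c \<noteq> 0 \<Longrightarrow> c*Gw2 \<noteq> (0::gf4)"
  by (cases c; simp add: zero_gf4_def)+
lemma gw_nz[simp]: "Gw \<noteq> 0" "Gw2 \<noteq> 0" "(1::gf4) \<noteq> 0" by (simp_all add: zero_gf4_def one_gf4_def)

lemma Qm_eq: assumes "i\<noteq>j" "c\<noteq>0" shows "Qm N i j c = Gm N i j (c*Gw) + Gm N i j (c*Gw2)"
  by (rule eq_matI) (use assms cw_nz[OF assms(2)] in \<open>auto simp: Qm_def Gm_entry cw_sum ccw_sum\<close>)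

lemma Qm_0: "Qm N i j 0 = 0\<^sub>m N N"
  by (rule eq_matI) (auto simp: Qm_def)

lemma Dm_eq: assumes "i\<noteq>j" shows "Dm N i j = Gm N i j 1 + Qm N i j 1"
  by (rule eq_matI) (use assms in \<open>auto simp: Qm_def Dm_def Gm_entry\<close>)

lemma add_twice: "X \<in> carrier_mat N N \<Longrightarrow> Y \<in> carrier_mat N N \<Longrightarrow> (X + Y) + Y = (X::gf4 mat)"
  by (rule eq_matI) (auto simp: add.assoc)

lemma su_span:
  assumes N: "2 \<le> N"
    and Padd: "\<And>X Y. X \<in> carrier_mat N N \<Longrightarrow> Y \<in> carrier_mat N N \<Longrightarrow> P X \<Longrightarrow> P Y \<Longrightarrow> P (X+Y)"
    and Pgen: "\<And>i j w. i<N \<Longrightarrow> j<N \<Longrightarrow> i\<noteq>j \<Longrightarrow> w\<noteq>0 \<Longrightarrow> P (Gm N i j w)"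
    and X: "X \<in> su N"
  shows "P X"
proof -
  have PQ: "Qm N i j c \<in> su N \<and> P (Qm N i j c)" if "i<N" "j<N" "i\<noteq>j" for i j c
  proof (cases "c = 0")
    case True
    have "Gm N i j 1 + Gm N i j 1 = 0\<^sub>m N N" by (rule eq_matI) auto
    then have "Qm N i j c = Gm N i j 1 + Gm N i j 1" using True Qm_0 by simp
    then show ?thesis using that Padd Pgen su_add Gm_su by simp
  next
    case False
    then show ?thesis using that Qm_eq Padd Pgen su_add Gm_su cw_nz by simp
  qed
  have PD: "Dm N i j \<in> su N \<and> P (Dm N i j)" if "i<N" "j<N" "i\<noteq>j" for i j
    using that Dm_eq PQ[OF that, of 1] Padd Pgen su_add Gm_su
    by (metis Gm_carrier suD(1) gw_nz(3))
  define nz where "nz Z = {p \<in> {..<N}\<times>{..<N}. Z$$p \<noteq> 0}" for Z :: "gf4 mat"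
  have fin: "finite (nz Z)" for Z unfolding nz_def by auto
  have step: "P Z" if Z: "Z \<in> su N" and Y: "Y \<in> su N" "P Y" and sub: "nz (Z+Y) \<subset> nz Z"
    and IH: "P (Z + Y)" for Z Y
    using Padd[OF _ _ IH Y(2)] add_twice[of Z N Y] suD(1)[OF Z] suD(1)[OF Y(1)] by auto
  have "\<forall>Z. Z \<in> su N \<longrightarrow> card (nz Z) = m \<longrightarrow> P Z" for m
  proof (induction m rule: less_induct)
    case (less m)
    show ?case
    proof (intro allI impI)
      fix Z assume Z: "Z \<in> su N" and cm: "card (nz Z) = m"
      note Zc = suD(1)[OF Z]
      have rec: "P Z" if Y: "Y \<in> su N" "P Y" and sub: "nz (Z+Y) \<subset> nz Z" for Y
      proof -
        have "card (nz (Z+Y)) < m" using psubset_card_mono[OF fin sub] cm by simp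
        then have "P (Z+Y)" using less su_add[OF Z Y(1)] by blast
        then show ?thesis using step[OF Z Y sub] by simp
      qed
      show "P Z"
      proof (cases "\<exists>i j. i<N \<and> j<N \<and> i\<noteq>j \<and> Z$$(i,j) \<noteq> 0")
        case True
        then obtain i j where ij: "i<N" "j<N" "i\<noteq>j" "Z$$(i,j) \<noteq> 0" by blast
        let ?Y = "Qm N i j (Z$$(i,j))"
        have cj: "gf4_conj (Z$$(i,j)) = Z$$(j,i)" using su_conj[OF Z ij(1,2)] .
        have zji: "Z$$(j,i) \<noteq> 0" using cj ij(4) by (metis conj_0 conj_conj)
        have ent: "(Z+?Y)$$(a,b) = (if (a,b) = (i,j) \<or> (a,b) = (j,i) then 0 else Z$$(a,b))"
          if "a<N" "b<N" for a b using that Zc ij cj by (auto simp: Qm_def)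
        have "nz (Z+?Y) = nz Z - {(i,j),(j,i)}"
          unfolding nz_def using ent by (auto split: if_splits)
        moreover have "(i,j) \<in> nz Z" using ij by (auto simp: nz_def)
        ultimately have "nz (Z+?Y) \<subset> nz Z" by blast
        then show ?thesis using rec PQ[OF ij(1-3)] by blast
      next
        case False
        note offd = False
        show ?thesis
        proof (cases "\<exists>i<N. Z$$(i,i) \<noteq> 0")
          case True
          then obtain i where i: "i<N" "Z$$(i,i) \<noteq> 0" by blast
          have one: "Z$$(k,k) = 1" if "k<N" "Z$$(k,k) \<noteq> 0" for k
            using conj_fix[OF su_conj[OF Z that(1) that(1)]] that by auto
          have "\<exists>j<N. j \<noteq> i \<and> Z$$(j,j) \<noteq> 0"
          proof (rule ccontr)
            assume "\<not> ?thesis"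
            then have "(\<Sum>k<N. Z$$(k,k)) = (\<Sum>k<N. if k = i then 1 else 0)"
              using one[OF i] by (intro sum.cong) auto
            also have "\<dots> = 1" using i by simp
            finally show False using suD(3)[OF Z] by simp
          qed
          then obtain j where j: "j<N" "j\<noteq>i" "Z$$(j,j) \<noteq> 0" by blast
          have o: "Z$$(i,i) = 1" "Z$$(j,j) = 1" using one i j by auto
          let ?Y = "Dm N i j"
          have ent: "(Z+?Y)$$(a,b) = (if (a,b) = (i,i) \<or> (a,b) = (j,j) then 0 else Z$$(a,b))"
            if "a<N" "b<N" for a b using that Zc o by (auto simp: Dm_def)
          have "nz (Z+?Y) = nz Z - {(i,i),(j,j)}"
            unfolding nz_def using ent by (auto split: if_splits)
          moreover have "(i,i) \<in> nz Z" using i by (auto simp: nz_def)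
          ultimately have "nz (Z+?Y) \<subset> nz Z" by blast
          then show ?thesis using rec PD[OF i(1) j(1)] j(2) by metis
        next
          case False
          have "Z = 0\<^sub>m N N"
          proof (rule eq_matI)
            fix i j assume "i < dim_row (0\<^sub>m N N :: gf4 mat)" "j < dim_col (0\<^sub>m N N :: gf4 mat)"
            then show "Z$$(i,j) = 0\<^sub>m N N $$ (i,j)" using offd False by (cases "i = j") auto
          qed (use Zc in auto)
          moreover have "P (0\<^sub>m N N)"
          proof -
            have "Qm N 0 1 0 = 0\<^sub>m N N" by (rule Qm_0)
            then show ?thesis using PQ[of 0 1 0] N by simp
          qed
          ultimately show ?thesis by simp
        qed
      qed
    qed
  qed
  then show ?thesis using X by blast
qed


lemma g2_eq_su: assumes "1 \<le> n" shows "g2 n = su (n+1)"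
proof
  show "g2 n \<subseteq> su (n+1)" using g2_su by blast
  show "su (n+1) \<subseteq> g2 n"
  proof
    fix X assume "X \<in> su (n+1)"
    then show "X \<in> g2 n"
    proof (rule su_span[rotated 3])
      show "2 \<le> n+1" using assms by simp
      show "\<And>X Y. X \<in> g2 n \<Longrightarrow> Y \<in> g2 n \<Longrightarrow> X + Y \<in> g2 n" by (rule g2.add)
      show "\<And>i j w. i < n + 1 \<Longrightarrow> j < n + 1 \<Longrightarrow> i \<noteq> j \<Longrightarrow> w \<noteq> 0 \<Longrightarrow> Gm (n + 1) i j w \<in> g2 n"
        by (rule g2.gen) (auto simp: g2_gens_Gm)
    qed
  qed
qed

lemma add_self_mat: "M \<in> carrier_mat n m \<Longrightarrow> M + M = 0\<^sub>m n m" for M :: "gf4 mat"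
  by (rule eq_matI) auto

lemma one_plus_mult: assumes "M \<in> carrier_mat N N" "K \<in> carrier_mat N N"
  shows "(1\<^sub>m N + M) * (1\<^sub>m N + K) = 1\<^sub>m N + M + K + M * (K :: gf4 mat)"
proof -
  have "(1\<^sub>m N + M) * (1\<^sub>m N + K) = 1\<^sub>m N * (1\<^sub>m N + K) + M * (1\<^sub>m N + K)"
    using assms by (intro add_mult_distrib_mat) auto
  also have "\<dots> = (1\<^sub>m N + K) + (M * 1\<^sub>m N + M * K)"
    using assms by (subst mult_add_distrib_mat[of _ N N]) auto
  also have "\<dots> = 1\<^sub>m N + M + K + M * K"
    using assms by (intro eq_matI) (auto simp: ac_simps)
  finally show ?thesis .
qed

definition Nd :: "nat \<Rightarrow> gf4 mat \<Rightarrow> gf4 mat" where "Nd N d = d + 1\<^sub>m N"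

lemma outer_dim[simp]: "dim_row (outer_prod v w) = dim_vec v" "dim_col (outer_prod v w) = dim_vec w"
  by (simp_all add: outer_prod_def)

lemma outer_carrier[simp]: "v \<in> carrier_vec N \<Longrightarrow> w \<in> carrier_vec N \<Longrightarrow> outer_prod v w \<in> carrier_mat N N"
  by (simp add: outer_prod_def)

lemma outer_entry: "v \<in> carrier_vec N \<Longrightarrow> w \<in> carrier_vec N \<Longrightarrow> i < N \<Longrightarrow> j < N \<Longrightarrow>
   outer_prod v w $$ (i,j) = v$i * w$j"
  by (simp add: outer_prod_def)

lemma outer_mult: assumes "v \<in> carrier_vec N" "w \<in> carrier_vec N" "a \<in> carrier_vec N" "b \<in> carrier_vec N"
  shows "outer_prod v w * outer_prod a b = (w \<bullet> a) \<cdot>\<^sub>m outer_prod v b"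
proof (rule eq_matI)
  fix i j assume ij: "i < dim_row ((w \<bullet> a) \<cdot>\<^sub>m outer_prod v b)" "j < dim_col ((w \<bullet> a) \<cdot>\<^sub>m outer_prod v b)"
  then have ij': "i < N" "j < N" using assms by (auto simp: outer_prod_def)
  show "(outer_prod v w * outer_prod a b) $$ (i,j) = ((w \<bullet> a) \<cdot>\<^sub>m outer_prod v b) $$ (i,j)"
  proof -
    have "(outer_prod v w * outer_prod a b) $$ (i,j) = (\<Sum>k<N. outer_prod v w $$ (i,k) * outer_prod a b $$ (k,j))"
      by (rule mult_entry) (use assms ij' in auto)
    also have "\<dots> = (\<Sum>k<N. v$i * w$k * (a$k * b$j))" using assms ij' by (simp add: outer_entry)
    also have "\<dots> = (w \<bullet> a) * (v$i * b$j)" using assms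
      by (auto simp: scalar_prod_def atLeast0LessThan sum_distrib_left carrier_vecD ac_simps intro!: sum.cong)
    also have "\<dots> = ((w \<bullet> a) \<cdot>\<^sub>m outer_prod v b) $$ (i,j)"
      using assms ij' by (simp add: outer_prod_def carrier_vecD)
    finally show ?thesis .
  qed
qed (use assms in \<open>auto simp: carrier_vecD\<close>)

lemma trace_outer: assumes "v \<in> carrier_vec N" "w \<in> carrier_vec N"
  shows "(\<Sum>i<N. outer_prod v w $$ (i,i)) = w \<bullet> v"
  using assms by (simp add: outer_entry scalar_prod_def atLeast0LessThan mult.commute)

lemma outer_nz: assumes "v \<in> carrier_vec N" "w \<in> carrier_vec N" "v \<noteq> 0\<^sub>v N" "w \<noteq> 0\<^sub>v N"
  shows "outer_prod v w \<noteq> 0\<^sub>m N N"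
proof -
  obtain i where i: "i < N" "v$i \<noteq> 0" using assms(1,3) by (metis eq_vecI carrier_vecD index_zero_vec)
  obtain j where j: "j < N" "w$j \<noteq> 0" using assms(2,4) by (metis eq_vecI carrier_vecD index_zero_vec)
  have "outer_prod v w $$ (i,j) \<noteq> 0" using i j assms by (simp add: outer_entry)
  then show ?thesis using i j by auto
qed

lemma adj_entry: "A \<in> carrier_mat N N \<Longrightarrow> i < N \<Longrightarrow> j < N \<Longrightarrow> adj_mat A $$ (i,j) = gf4_conj (A $$ (j,i))"
  by (simp add: adj_mat_def)

lemma adj_carrier[simp]: "A \<in> carrier_mat N N \<Longrightarrow> adj_mat A \<in> carrier_mat N N"
  by (simp add: adj_mat_def)

lemma transv_facts: assumes "d \<in> transvD n"
  obtains v w where "v \<in> carrier_vec (n+1)" "w \<in> carrier_vec (n+1)" "v \<noteq> 0\<^sub>v (n+1)" "w \<noteq> 0\<^sub>v (n+1)"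
    "w \<bullet> v = 0" "Nd (n+1) d = outer_prod v w" "d = 1\<^sub>m (n+1) + outer_prod v w"
    "d \<in> carrier_mat (n+1) (n+1)" "d * adj_mat d = 1\<^sub>m (n+1)"
proof -
  from assms obtain v w where vw: "v \<in> carrier_vec (n+1)" "w \<in> carrier_vec (n+1)" "v \<noteq> 0\<^sub>v (n+1)" "w \<noteq> 0\<^sub>v (n+1)"
    "w \<bullet> v = 0" "d = 1\<^sub>m (n+1) + outer_prod v w"
    unfolding transvD_def is_transvection_def by blast
  have "d \<in> SU n" using assms by (simp add: transvD_def)
  then have u: "d * adj_mat d = 1\<^sub>m (n+1)" "d \<in> carrier_mat (n+1) (n+1)" by (auto simp: SU_def)
  have "Nd (n+1) d = outer_prod v w" unfolding Nd_def vw(6)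
    by (rule eq_matI) (use vw in \<open>auto simp: add.commute add.left_commute\<close>)
  then show ?thesis using that vw u by blast
qed


lemma D_props: assumes d: "d \<in> transvD n"
  shows "Nd (n+1) d \<in> su (n+1)" "Nd (n+1) d * Nd (n+1) d = 0\<^sub>m (n+1) (n+1)"
    "d = 1\<^sub>m (n+1) + Nd (n+1) d" "d \<in> carrier_mat (n+1) (n+1)"
proof -
  obtain v w where vw: "v \<in> carrier_vec (n+1)" "w \<in> carrier_vec (n+1)" "v \<noteq> 0\<^sub>v (n+1)" "w \<noteq> 0\<^sub>v (n+1)"
    "w \<bullet> v = 0" "Nd (n+1) d = outer_prod v w" "d = 1\<^sub>m (n+1) + outer_prod v w"
    "d \<in> carrier_mat (n+1) (n+1)" "d * adj_mat d = 1\<^sub>m (n+1)"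
    using transv_facts[OF d] by blast
  let ?M = "outer_prod v w"
  have Mc: "?M \<in> carrier_mat (n+1) (n+1)" using vw by simp
  have sq: "?M * ?M = 0\<^sub>m (n+1) (n+1)"
    unfolding outer_mult[OF vw(1,2,1,2)] vw(5) by (rule eq_matI) (use vw in \<open>auto simp: carrier_vecD\<close>)
  then show "Nd (n+1) d * Nd (n+1) d = 0\<^sub>m (n+1) (n+1)" using vw(6) by simp
  show "d = 1\<^sub>m (n+1) + Nd (n+1) d" using vw(6,7) by simp
  show "d \<in> carrier_mat (n+1) (n+1)" by (rule vw(8))
  have dd: "d * d = 1\<^sub>m (n+1)"
    unfolding vw(7) one_plus_mult[OF Mc Mc] sq by (rule eq_matI) (use Mc vw in \<open>auto simp: carrier_vecD\<close>)
  have adj: "adj_mat d = d"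
  proof -
    have "adj_mat d = (d * d) * adj_mat d" using dd left_mult_one_mat[OF adj_carrier[OF vw(8)]] by simp
    also have "\<dots> = d * (d * adj_mat d)" by (rule assoc_mult_mat[OF vw(8) vw(8) adj_carrier[OF vw(8)]])
    also have "\<dots> = d" using vw(8,9) by simp
    finally show ?thesis .
  qed
  show "Nd (n+1) d \<in> su (n+1)"
  proof (rule suI)
    show "Nd (n+1) d \<in> carrier_mat (n+1) (n+1)" using vw Mc by simp
    fix i j assume ij: "i < n+1" "j < n+1"
    have "d $$ (j,i) = gf4_conj (d $$ (i,j))"
      using adj_entry[OF vw(8) ij(2,1)] adj by simp
    then show "Nd (n+1) d $$ (j,i) = gf4_conj (Nd (n+1) d $$ (i,j))"
      using ij vw(8) by (simp add: Nd_def)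
  next
    show "(\<Sum>i<n+1. Nd (n+1) d $$ (i,i)) = 0" unfolding vw(6) trace_outer[OF vw(1,2)] by (rule vw(5))
  qed
qed

lemma smult_smult_mat: "(a::gf4) \<cdot>\<^sub>m (b \<cdot>\<^sub>m A) = (a * b) \<cdot>\<^sub>m A"
  by (rule eq_matI) auto

lemma one_smult_mat_gf4[simp]: "(1::gf4) \<cdot>\<^sub>m A = A"
  by (rule eq_matI) auto

lemma herm_prod: assumes "M \<in> su N" "K \<in> su N" "i < N" "j < N"
  shows "(K * M) $$ (i,j) = gf4_conj ((M * K) $$ (j,i))"
proof -
  have c: "M \<in> carrier_mat N N" "K \<in> carrier_mat N N" using suD(1) assms by auto
  have "gf4_conj ((M * K) $$ (j,i)) = (\<Sum>k<N. gf4_conj (M$$(j,k)) * gf4_conj (K$$(k,i)))"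
    by (simp add: mult_entry[OF c assms(4,3)] conj_sum)
  also have "\<dots> = (\<Sum>k<N. K$$(i,k) * M$$(k,j))"
    using assms by (intro sum.cong) (auto simp: su_conj mult.commute)
  also have "\<dots> = (K * M) $$ (i,j)" by (simp add: mult_entry[OF c(2,1) assms(3,4)])
  finally show ?thesis by simp
qed

lemma mat_cancel: assumes "A \<in> carrier_mat N N" "B \<in> carrier_mat N N" "C \<in> carrier_mat N N"
   "X \<in> carrier_mat N N" "Y \<in> carrier_mat N N"
  shows "(A + B + C + X = A + C + B + Y) \<longleftrightarrow> X = (Y :: gf4 mat)"
proof
  assume e: "A + B + C + X = A + C + B + Y"
  show "X = Y"
  proof (rule eq_matI)
    fix i j assume "i < dim_row Y" "j < dim_col Y"
    then have ij: "i < N" "j < N" using assms by auto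
    have "(A + B + C + X) $$ (i,j) = (A + C + B + Y) $$ (i,j)" using e by simp
    then show "X $$ (i,j) = Y $$ (i,j)" using assms ij by (simp add: ac_simps)
  qed (use assms in auto)
next
  assume "X = Y"
  then show "A + B + C + X = A + C + B + Y"
    by (intro eq_matI) (use assms in \<open>auto simp: ac_simps\<close>)
qed

lemma pair_props: assumes d: "d \<in> transvD n" and e: "e \<in> transvD n"
  defines "M \<equiv> Nd (n+1) d" and "K \<equiv> Nd (n+1) e"
  shows "(d * e = e * d) \<longleftrightarrow> M * K = K * M"
    "(\<Sum>i<n+1. (M * K) $$ (i,i)) = of_bool (d * e \<noteq> e * d)"
    "d * e \<noteq> e * d \<Longrightarrow> M * K * M = M \<and> K * M * K = K"
proof -
  let ?N = "n+1"
  obtain v w where vw: "v \<in> carrier_vec ?N" "w \<in> carrier_vec ?N" "v \<noteq> 0\<^sub>v ?N" "w \<noteq> 0\<^sub>v ?N"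
    "M = outer_prod v w" using transv_facts[OF d] M_def by metis
  obtain a b where ab: "a \<in> carrier_vec ?N" "b \<in> carrier_vec ?N" "a \<noteq> 0\<^sub>v ?N" "b \<noteq> 0\<^sub>v ?N"
    "K = outer_prod a b" using transv_facts[OF e] K_def by metis
  note Dd = D_props[OF d, folded M_def] and De = D_props[OF e, folded K_def]
  have Mc: "M \<in> carrier_mat ?N ?N" and Kc: "K \<in> carrier_mat ?N ?N" using suD(1) Dd(1) De(1) by auto
  have MK: "M * K = (w \<bullet> a) \<cdot>\<^sub>m outer_prod v b" using outer_mult[OF vw(1,2) ab(1,2)] vw ab by simp
  have KM: "K * M = (b \<bullet> v) \<cdot>\<^sub>m outer_prod a w" using outer_mult[OF ab(1,2) vw(1,2)] vw ab by simp
  define l where "l = (w \<bullet> a) * (b \<bullet> v)"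
  have trMK: "(\<Sum>i<?N. (M * K) $$ (i,i)) = l"
  proof -
    have "(\<Sum>i<?N. (M * K) $$ (i,i)) = (\<Sum>i<?N. (w \<bullet> a) * outer_prod v b $$ (i,i))"
      unfolding MK using vw ab by (intro sum.cong) (auto simp: carrier_vecD)
    also have "\<dots> = l" unfolding l_def by (subst sum_distrib_left[symmetric]) (simp only: trace_outer[OF vw(1) ab(2)])
    finally show ?thesis .
  qed
  have trKM: "(\<Sum>i<?N. (K * M) $$ (i,i)) = l"
  proof -
    have "(\<Sum>i<?N. (K * M) $$ (i,i)) = (\<Sum>i<?N. (b \<bullet> v) * outer_prod a w $$ (i,i))"
      unfolding KM using vw ab by (intro sum.cong) (auto simp: carrier_vecD)
    also have "\<dots> = l" unfolding l_def by (subst sum_distrib_left[symmetric]) (simp only: trace_outer[OF ab(1) vw(2)] mult.commute)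
    finally show ?thesis .
  qed
  have "gf4_conj l = l"
  proof -
    have "gf4_conj l = (\<Sum>i<?N. gf4_conj ((M * K) $$ (i,i)))" unfolding trMK[symmetric] by (simp add: conj_sum)
    also have "\<dots> = (\<Sum>i<?N. (K * M) $$ (i,i))" using herm_prod[OF Dd(1) De(1)] by simp
    finally show ?thesis using trKM by simp
  qed
  then have l01: "l = 0 \<or> l = 1" by (rule conj_fix)
  have MKM: "M * K * M = l \<cdot>\<^sub>m M"
    unfolding MK unfolding vw(5) l_def
    by (simp add: mult_smult_assoc_mat[OF outer_carrier[OF vw(1) ab(2)] outer_carrier[OF vw(1,2)]]
       outer_mult[OF vw(1) ab(2) vw(1,2)] smult_smult_mat)
  have KMK: "K * M * K = l \<cdot>\<^sub>m K"
    unfolding KM unfolding ab(5) l_def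
    by (simp add: mult_smult_assoc_mat[OF outer_carrier[OF ab(1) vw(2)] outer_carrier[OF ab(1,2)]]
       outer_mult[OF ab(1) vw(2) ab(1,2)] smult_smult_mat mult.commute)
  have de: "d * e = 1\<^sub>m ?N + M + K + M * K" using Dd(3) De(3) one_plus_mult[OF Mc Kc] by simp
  have ed: "e * d = 1\<^sub>m ?N + K + M + K * M" using Dd(3) De(3) one_plus_mult[OF Kc Mc] by simp
  show comm: "(d * e = e * d) \<longleftrightarrow> M * K = K * M"
    unfolding de ed by (rule mat_cancel) (use Mc Kc in auto)
  have Mnz: "M \<noteq> 0\<^sub>m ?N ?N" using outer_nz[OF vw(1-4)] vw(5) by simp
  show "(\<Sum>i<?N. (M * K) $$ (i,i)) = of_bool (d * e \<noteq> e * d)"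
  proof (cases "l = 0")
    case True
    then have "w \<bullet> a = 0 \<or> b \<bullet> v = 0" unfolding l_def by simp
    then have "M * K = 0\<^sub>m ?N ?N \<and> K * M = 0\<^sub>m ?N ?N"
    proof
      assume wa: "w \<bullet> a = 0"
      have z: "M * K = 0\<^sub>m ?N ?N" unfolding MK by (rule eq_matI) (use vw ab wa in \<open>auto simp: carrier_vecD\<close>)
      have "K * M = 0\<^sub>m ?N ?N"
        by (rule eq_matI) (use herm_prod[OF Dd(1) De(1)] z Mc Kc in auto)
      then show ?thesis using z by simp
    next
      assume bv: "b \<bullet> v = 0"
      have z: "K * M = 0\<^sub>m ?N ?N" unfolding KM by (rule eq_matI) (use vw ab bv in \<open>auto simp: carrier_vecD\<close>)
      have "M * K = 0\<^sub>m ?N ?N"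
        by (rule eq_matI) (use herm_prod[OF De(1) Dd(1)] z Mc Kc in auto)
      then show ?thesis using z by simp
    qed
    then show ?thesis using comm trMK True by simp
  next
    case False
    then have l1: "l = 1" using l01 by simp
    have "M * K \<noteq> K * M"
    proof
      assume c: "M * K = K * M"
      have "M = M * K * M" using MKM l1 Mc by simp
      also have "\<dots> = K * M * M" using c by simp
      also have "\<dots> = K * (M * M)" using Mc Kc by simp
      also have "\<dots> = 0\<^sub>m ?N ?N" using Dd(2) Kc by simp
      finally show False using Mnz by simp
    qed
    then show ?thesis using comm trMK l1 by simp
  qed
  show "d * e \<noteq> e * d \<Longrightarrow> M * K * M = M \<and> K * M * K = K"
  proof -
    assume ne: "d * e \<noteq> e * d"
    have "l \<noteq> 0"
    proof
      assume l0: "l = 0"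
      then have "w \<bullet> a = 0 \<or> b \<bullet> v = 0" unfolding l_def by simp
      then have "M * K = 0\<^sub>m ?N ?N \<and> K * M = 0\<^sub>m ?N ?N"
      proof
        assume wa: "w \<bullet> a = 0"
        have z: "M * K = 0\<^sub>m ?N ?N" unfolding MK by (rule eq_matI) (use vw ab wa in \<open>auto simp: carrier_vecD\<close>)
        have "K * M = 0\<^sub>m ?N ?N"
          by (rule eq_matI) (use herm_prod[OF Dd(1) De(1)] z Mc Kc in auto)
        then show ?thesis using z by simp
      next
        assume bv: "b \<bullet> v = 0"
        have z: "K * M = 0\<^sub>m ?N ?N" unfolding KM by (rule eq_matI) (use vw ab bv in \<open>auto simp: carrier_vecD\<close>)
        have "M * K = 0\<^sub>m ?N ?N"
          by (rule eq_matI) (use herm_prod[OF De(1) Dd(1)] z Mc Kc in auto)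
        then show ?thesis using z by simp
      qed
      then show False using ne comm by simp
    qed
    then have "l = 1" using l01 by simp
    then show ?thesis using MKM KMK Mc Kc by simp
  qed
qed


lemma ede_identity: assumes d: "d \<in> transvD n" and e: "e \<in> transvD n" and ne: "d * e \<noteq> e * d"
  shows "Nd (n+1) d + Nd (n+1) e + Nd (n+1) (e * d * e) = Nd (n+1) d * Nd (n+1) e + Nd (n+1) e * Nd (n+1) d"
proof -
  let ?N = "n+1"
  define M where "M = Nd ?N d"
  define K where "K = Nd ?N e"
  note Dd = D_props[OF d, folded M_def] and De = D_props[OF e, folded K_def]
  have Mc: "M \<in> carrier_mat ?N ?N" and Kc: "K \<in> carrier_mat ?N ?N" using suD(1) Dd(1) De(1) by auto
  have KMK: "K * M * K = K" using pair_props(3)[OF d e ne] M_def K_def by simp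
  define R where "R = K + M + K * M"
  have Rc: "R \<in> carrier_mat ?N ?N" unfolding R_def using Mc Kc by simp
  have ed: "e * d = 1\<^sub>m ?N + R"
  proof -
    have "e * d = 1\<^sub>m ?N + K + M + K * M" using Dd(3) De(3) one_plus_mult[OF Kc Mc] by simp
    also have "\<dots> = 1\<^sub>m ?N + R" unfolding R_def by (rule eq_matI) (use Mc Kc in \<open>auto simp: ac_simps\<close>)
    finally show ?thesis .
  qed
  have RK: "R * K = K * K + M * K + K"
  proof -
    have "R * K = (K + M) * K + (K * M) * K" unfolding R_def
      by (rule add_mult_distrib_mat) (use Mc Kc in auto)
    also have "\<dots> = K * K + M * K + K" using KMK
      by (subst add_mult_distrib_mat[of _ ?N ?N]) (use Mc Kc in auto)
    finally show ?thesis .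
  qed
  have ede: "e * d * e = 1\<^sub>m ?N + R + K + R * K"
    using ed De(3) one_plus_mult[OF Rc Kc] by simp
  define P where "P = M * K"
  define Q where "Q = K * M"
  have Pc: "P \<in> carrier_mat ?N ?N" and Qc: "Q \<in> carrier_mat ?N ?N" using Mc Kc by (simp_all add: P_def Q_def)
  have KK: "K * K = 0\<^sub>m ?N ?N" using De(2) K_def by simp
  have RK': "R * K = 0\<^sub>m ?N ?N + P + K" using RK KK P_def by simp
  have R': "R = K + M + Q" using R_def Q_def by simp
  have "Nd ?N d + Nd ?N e + Nd ?N (e * d * e) = M + K + (1\<^sub>m ?N + (K + M + Q) + K + (0\<^sub>m ?N ?N + P + K) + 1\<^sub>m ?N)"
    unfolding M_def K_def using ede RK' R' by (simp add: Nd_def M_def K_def)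
  also have "\<dots> = P + Q" by (rule eq_matI) (use Mc Kc Pc Qc in \<open>auto simp: ac_simps\<close>)
  finally show ?thesis unfolding P_def Q_def M_def K_def .
qed

lemma Gm_in_D: assumes ij: "i < n+1" "j < n+1" "i \<noteq> j" and w: "w \<noteq> 0"
  shows "1\<^sub>m (n+1) + Gm (n+1) i j w \<in> transvD n"
proof -
  let ?N = "n+1"
  let ?G = "Gm ?N i j w"
  define v where "v = vec ?N (\<lambda>k. if k = i then 1 else if k = j then gf4_conj w else 0)"
  define u where "u = vec ?N (\<lambda>k. if k = i then 1 else if k = j then w else 0)"
  have vc: "v \<in> carrier_vec ?N" and uc: "u \<in> carrier_vec ?N" by (simp_all add: v_def u_def)
  have cw: "gf4_conj w * w = 1" using conj_norm[OF w] by (simp add: mult.commute)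
  have G: "?G = outer_prod v u"
    by (rule eq_matI) (use ij w cw in \<open>auto simp: Gm_entry outer_entry v_def u_def\<close>)
  have uv: "u \<bullet> v = 0"
  proof -
    have "u \<bullet> v = (\<Sum>k<?N. u$k * v$k)" by (simp add: scalar_prod_def v_def atLeast0LessThan)
    also have "\<dots> = (\<Sum>k\<in>{i,j}. u$k * v$k)"
      using ij by (intro sum.mono_neutral_cong_right) (auto simp: u_def v_def)
    also have "\<dots> = 0" using ij conj_norm[OF w] by (simp add: u_def v_def)
    finally show ?thesis .
  qed
  have vnz: "v \<noteq> 0\<^sub>v ?N"
  proof
    assume "v = 0\<^sub>v ?N"
    then have "v $ i = 0" using ij by simp
    then show False using ij by (simp add: v_def)
  qed
  have unz: "u \<noteq> 0\<^sub>v ?N"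
  proof
    assume "u = 0\<^sub>v ?N"
    then have "u $ i = 0" using ij by simp
    then show False using ij by (simp add: u_def)
  qed
  have Gsu: "?G \<in> su ?N" using Gm_su ij w by simp
  have Gc: "?G \<in> carrier_mat ?N ?N" by simp
  have GG: "?G * ?G = 0\<^sub>m ?N ?N"
    unfolding G outer_mult[OF vc uc vc uc] uv by (rule eq_matI) (use vc uc in \<open>auto simp: carrier_vecD\<close>)
  let ?A = "1\<^sub>m ?N + ?G"
  have Ac: "?A \<in> carrier_mat ?N ?N" by simp
  have AA: "?A * ?A = 1\<^sub>m ?N"
    unfolding one_plus_mult[OF Gc Gc] GG by (rule eq_matI) auto
  have adj: "adj_mat ?A = ?A"
  proof (rule eq_matI)
    fix k l assume "k < dim_row ?A" "l < dim_col ?A"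
    then have kl: "k < ?N" "l < ?N" by auto
    show "adj_mat ?A $$ (k,l) = ?A $$ (k,l)"
      using adj_entry[OF Ac kl] kl su_conj[OF Gsu kl(2,1)] by auto
  qed (use Ac in \<open>auto simp: adj_mat_def\<close>)
  have "det ?A * det ?A = 1" using det_mult[OF Ac Ac] AA by simp
  then have "det ?A = 1" by (rule sq_one)
  then have "?A \<in> SU n" using AA adj Ac by (simp add: SU_def)
  moreover have "is_transvection ?N ?A"
    unfolding is_transvection_def
    by (rule exI[of _ v], rule exI[of _ u]) (use vc uc vnz unz uv G in simp)
  ultimately show ?thesis by (simp add: transvD_def)
qed

lemma Nd_Gm: "Nd (n+1) (1\<^sub>m (n+1) + Gm (n+1) i j w) = Gm (n+1) i j w"
  unfolding Nd_def by (rule eq_matI) (auto simp: ac_simps)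


lemma Qm_su: "i < N \<Longrightarrow> j < N \<Longrightarrow> i \<noteq> j \<Longrightarrow> c \<noteq> 0 \<Longrightarrow> Qm N i j c \<in> su N"
  using Qm_eq su_add Gm_su cw_nz by simp

lemma Dm_su: "i < N \<Longrightarrow> j < N \<Longrightarrow> i \<noteq> j \<Longrightarrow> Dm N i j \<in> su N"
  using Dm_eq su_add Gm_su Qm_su gw_nz(3) by simp

lemma gf4_add_eq0: "(a::gf4) + b = 0 \<longleftrightarrow> a = b"
  by (cases a; cases b) (simp_all add: zero_gf4_def)

lemma bracket_zero_iff: assumes "X \<in> carrier_mat N N" "Y \<in> carrier_mat N N"
  shows "lie_bracket X Y = 0\<^sub>m N N \<longleftrightarrow> X * Y = Y * X"
proof
  assume z: "lie_bracket X Y = 0\<^sub>m N N"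
  show "X * Y = Y * X"
  proof (rule eq_matI)
    fix i j assume "i < dim_row (Y * X)" "j < dim_col (Y * X)"
    then have ij: "i < N" "j < N" using assms by auto
    have "lie_bracket X Y $$ (i,j) = 0" using z ij by simp
    then show "(X * Y) $$ (i,j) = (Y * X) $$ (i,j)"
      using ij assms by (simp add: lie_bracket_def gf4_minus gf4_add_eq0)
  qed (use assms in auto)
next
  assume "X * Y = Y * X"
  then show "lie_bracket X Y = 0\<^sub>m N N" unfolding lie_bracket_def
    by (intro eq_matI) (use assms in auto)
qed

lemma QmL: assumes X: "X \<in> carrier_mat N N" and ij: "i < N" "j < N" "i \<noteq> j" and kl: "k < N" "l < N"
  shows "(X * Qm N i j c) $$ (k,l) = (if l = j then X$$(k,i) * c else 0) + (if l = i then X$$(k,j) * gf4_conj c else 0)"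
proof -
  have "(X * Qm N i j c) $$ (k,l) = (\<Sum>m<N. X$$(k,m) * Qm N i j c $$ (m,l))"
    by (rule mult_entry) (use X kl in \<open>auto simp: Qm_def\<close>)
  also have "\<dots> = (\<Sum>m<N. (if m = i then (if l = j then X$$(k,i) * c else 0) else 0)
        + (if m = j then (if l = i then X$$(k,j) * gf4_conj c else 0) else 0))"
    using ij kl by (intro sum.cong) (auto simp: Qm_def)
  also have "\<dots> = (if l = j then X$$(k,i) * c else 0) + (if l = i then X$$(k,j) * gf4_conj c else 0)"
    using ij by (simp add: sum.distrib)
  finally show ?thesis .
qed

lemma QmR: assumes X: "X \<in> carrier_mat N N" and ij: "i < N" "j < N" "i \<noteq> j" and kl: "k < N" "l < N"
  shows "(Qm N i j c * X) $$ (k,l) = (if k = i then c * X$$(j,l) else 0) + (if k = j then gf4_conj c * X$$(i,l) else 0)"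
proof -
  have "(Qm N i j c * X) $$ (k,l) = (\<Sum>m<N. Qm N i j c $$ (k,m) * X$$(m,l))"
    by (rule mult_entry) (use X kl in \<open>auto simp: Qm_def\<close>)
  also have "\<dots> = (\<Sum>m<N. (if m = j then (if k = i then c * X$$(j,l) else 0) else 0)
        + (if m = i then (if k = j then gf4_conj c * X$$(i,l) else 0) else 0))"
    using ij kl by (intro sum.cong) (auto simp: Qm_def)
  also have "\<dots> = (if k = i then c * X$$(j,l) else 0) + (if k = j then gf4_conj c * X$$(i,l) else 0)"
    using ij by (simp add: sum.distrib)
  finally show ?thesis .
qed

lemma DmL: assumes X: "X \<in> carrier_mat N N" and kl: "k < N" "l < N"
  shows "(X * Dm N i j) $$ (k,l) = (if l = i \<or> l = j then X$$(k,l) else 0)"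
proof -
  have "(X * Dm N i j) $$ (k,l) = (\<Sum>m<N. X$$(k,m) * Dm N i j $$ (m,l))"
    by (rule mult_entry) (use X kl in \<open>auto simp: Dm_def\<close>)
  also have "\<dots> = (\<Sum>m<N. if m = l then (if l = i \<or> l = j then X$$(k,l) else 0) else 0)"
    using kl by (intro sum.cong) (auto simp: Dm_def)
  also have "\<dots> = (if l = i \<or> l = j then X$$(k,l) else 0)" using kl by simp
  finally show ?thesis .
qed

definition scal :: "nat \<Rightarrow> gf4 mat \<Rightarrow> bool" where
  "scal N X \<longleftrightarrow> (\<forall>k<N. \<forall>l<N. X$$(k,l) = (if k = l then X$$(0,0) else 0))"

lemma comm_scal: assumes N: "3 \<le> N" and X: "X \<in> su N" and comm: "\<And>Y. Y \<in> su N \<Longrightarrow> X * Y = Y * X"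
  shows "scal N X"
  unfolding scal_def
proof (intro allI impI)
  fix k l assume kl: "k < N" "l < N"
  have Xc: "X \<in> carrier_mat N N" using suD(1)[OF X] .
  show "X$$(k,l) = (if k = l then X$$(0,0) else 0)"
  proof (cases "k = l")
    case True
    show ?thesis
    proof (cases "k = 0")
      case False
      have Y: "Qm N 0 k 1 \<in> su N" using Qm_su kl False by simp
      have "(X * Qm N 0 k 1) $$ (0,k) = (Qm N 0 k 1 * X) $$ (0,k)" using comm[OF Y] by simp
      then show ?thesis using QmL[OF Xc _ kl(1) _ _ kl(1), of 0 0 1] QmR[OF Xc _ kl(1) _ _ kl(1), of 0 0 1]
        False True kl by simp
    qed (use True in simp)
  next
    case False
    have "\<exists>j<N. j \<noteq> k \<and> j \<noteq> l"
    proof (cases "k \<noteq> 0 \<and> l \<noteq> 0")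
      case True then show ?thesis using N by (intro exI[of _ 0]) auto
    next
      case F1: False
      show ?thesis
      proof (cases "k \<noteq> 1 \<and> l \<noteq> 1")
        case True then show ?thesis using N by (intro exI[of _ 1]) auto
      next
        case False then show ?thesis using N F1 by (intro exI[of _ 2]) auto
      qed
    qed
    then obtain j where j: "j < N" "j \<noteq> k" "j \<noteq> l" by blast
    have Y: "Qm N l j 1 \<in> su N" using Qm_su kl j by simp
    have "(X * Qm N l j 1) $$ (k,j) = (Qm N l j 1 * X) $$ (k,j)" using comm[OF Y] by simp
    then show ?thesis using QmL[OF Xc kl(2) j(1) _ kl(1) j(1), of 1] QmR[OF Xc kl(2) j(1) _ kl(1) j(1), of 1]
        False j by simp
  qed
qed

lemma trace_scal: assumes N: "2 \<le> N" and X: "X \<in> su N"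
  and tr: "\<And>Y. Y \<in> su N \<Longrightarrow> (\<Sum>i<N. (X * Y) $$ (i,i)) = 0"
  shows "scal N X"
  unfolding scal_def
proof (intro allI impI)
  fix k l assume kl: "k < N" "l < N"
  have Xc: "X \<in> carrier_mat N N" using suD(1)[OF X] .
  show "X$$(k,l) = (if k = l then X$$(0,0) else 0)"
  proof (cases "k = l")
    case True
    show ?thesis
    proof (cases "k = 0")
      case False
      have Y: "Dm N 0 k \<in> su N" using Dm_su kl False by simp
      have "(\<Sum>i<N. (X * Dm N 0 k) $$ (i,i)) = (\<Sum>i<N. if i = 0 \<or> i = k then X$$(i,i) else 0)"
        using Xc by (intro sum.cong) (auto simp: DmL)
      also have "\<dots> = (\<Sum>i\<in>{0,k}. X$$(i,i))"
        using kl by (intro sum.mono_neutral_cong_right; auto)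
      also have "\<dots> = X$$(0,0) + X$$(k,k)" using False by simp
      finally have "X$$(0,0) + X$$(k,k) = 0" using tr[OF Y] by simp
      then show ?thesis using True by (simp add: gf4_add_eq0)
    qed (use True in simp)
  next
    case False
    have t: "X$$(l,k) * c + X$$(k,l) * gf4_conj c = 0" if "c \<noteq> 0" for c
    proof -
      have Y: "Qm N k l c \<in> su N" using Qm_su kl False that by simp
      have "(\<Sum>i<N. (X * Qm N k l c) $$ (i,i)) = (\<Sum>i<N. (if i = l then X$$(i,k) * c else 0) + (if i = k then X$$(i,l) * gf4_conj c else 0))"
        using Xc kl False by (intro sum.cong) (auto simp: QmL)
      also have "\<dots> = X$$(l,k) * c + X$$(k,l) * gf4_conj c" using kl by (simp add: sum.distrib)
      finally show ?thesis using tr[OF Y] by simp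
    qed
    have cj: "X$$(k,l) = gf4_conj (X$$(l,k))" using su_conj[OF X kl(2,1)] by simp
    have "X$$(l,k) = 0"
      by (rule tr_zero) (use t[of 1] t[of Gw] cj in \<open>simp_all add: mult.commute\<close>)
    then have "X$$(k,l) = 0" using cj by simp
    then show ?thesis using False by simp
  qed
qed

lemma scal_props: assumes sc: "scal N X" and X: "X \<in> carrier_mat N N" and Y: "Y \<in> su N"
  shows "X * Y = Y * X" "(\<Sum>i<N. (X * Y) $$ (i,i)) = 0"
proof -
  have Yc: "Y \<in> carrier_mat N N" using suD(1)[OF Y] .
  obtain c where ent: "\<And>k l. k < N \<Longrightarrow> l < N \<Longrightarrow> X$$(k,l) = (if k = l then c else 0)"
    using sc unfolding scal_def by blast
  have XY: "(X * Y) $$ (k,l) = c * Y$$(k,l)" if "k < N" "l < N" for k l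
  proof -
    have "(X * Y) $$ (k,l) = (\<Sum>m<N. X$$(k,m) * Y$$(m,l))" by (rule mult_entry[OF X Yc that])
    also have "\<dots> = (\<Sum>m<N. if m = k then c * Y$$(k,l) else 0)"
      using that by (intro sum.cong) (auto simp: ent)
    finally show ?thesis using that by simp
  qed
  have YX: "(Y * X) $$ (k,l) = c * Y$$(k,l)" if "k < N" "l < N" for k l
  proof -
    have "(Y * X) $$ (k,l) = (\<Sum>m<N. Y$$(k,m) * X$$(m,l))" by (rule mult_entry[OF Yc X that])
    also have "\<dots> = (\<Sum>m<N. if m = l then c * Y$$(k,l) else 0)"
      using that by (intro sum.cong) (auto simp: ent mult.commute)
    finally show ?thesis using that by simp
  qed
  show "X * Y = Y * X" by (rule eq_matI) (use X Yc XY YX in auto)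
  have "(\<Sum>i<N. (X * Y) $$ (i,i)) = (\<Sum>i<N. c * Y$$(i,i))" using XY by simp
  also have "\<dots> = 0" using suD(3)[OF Y] by (simp add: sum_distrib_left[symmetric])
  finally show "(\<Sum>i<N. (X * Y) $$ (i,i)) = 0" .
qed

lemma center_iff: assumes N: "3 \<le> N" and X: "X \<in> su N"
  shows "(\<forall>Y\<in>su N. lie_bracket X Y = 0\<^sub>m N N) \<longleftrightarrow> (\<forall>Y\<in>su N. (\<Sum>i<N. (X * Y) $$ (i,i)) = 0)"
proof -
  have Xc: "X \<in> carrier_mat N N" using suD(1)[OF X] .
  have "(\<forall>Y\<in>su N. lie_bracket X Y = 0\<^sub>m N N) \<longleftrightarrow> (\<forall>Y\<in>su N. X * Y = Y * X)"
    using bracket_zero_iff[OF Xc] suD(1) by blast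
  also have "\<dots> \<longleftrightarrow> scal N X" using comm_scal[OF N X] scal_props(1)[OF _ Xc] by blast
  also have "\<dots> \<longleftrightarrow> (\<forall>Y\<in>su N. (\<Sum>i<N. (X * Y) $$ (i,i)) = 0)"
    using trace_scal[OF _ X] N scal_props(2)[OF _ Xc] by fastforce
  finally show ?thesis .
qed


definition bg :: "bit \<Rightarrow> gf4" where "bg b = (if b = 1 then 1 else 0)"

lemma bg_add[simp]: "bg (a + b) = bg a + bg b"
  by (cases a; cases b) (simp_all add: bg_def)
lemma bg_mult[simp]: "bg (a * b) = bg a * bg b"
  by (cases a; cases b) (simp_all add: bg_def)
lemma bg_0[simp]: "bg 0 = 0" by (simp add: bg_def)
lemma bg_1[simp]: "bg 1 = 1" by (simp add: bg_def)
lemma bg_sum: "bg (sum f A) = (\<Sum>x\<in>A. bg (f x))"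
  by (induction A rule: infinite_finite_induct) auto
lemma bg_of_bool[simp]: "bg (of_bool P) = of_bool P" by (cases P) auto
lemma bg_eq0: "bg a = 0 \<longleftrightarrow> a = 0" by (cases a) (simp_all add: bg_def)
lemma conj_bg[simp]: "gf4_conj (bg b) = bg b" by (simp add: bg_def)

lemma finite_D: "finite (transvD n)"
  by (rule finite_subset[OF _ finite_carrier_gf4[of "n+1" "n+1"]]) (auto simp: transvD_def SU_def)

definition Sset :: "nat \<Rightarrow> gf4 mat set" where
  "Sset n = transvD n \<union> (\<lambda>(d,e). e * d * e) ` (transvD n \<times> transvD n)"

lemma finite_S: "finite (Sset n)" by (simp add: Sset_def finite_D)
lemma D_sub_S: "transvD n \<subseteq> Sset n" by (simp add: Sset_def)
lemma ede_S: "d \<in> transvD n \<Longrightarrow> e \<in> transvD n \<Longrightarrow> e * d * e \<in> Sset n" by (force simp: Sset_def)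

definition phi :: "nat \<Rightarrow> (gf4 mat \<Rightarrow> bit) \<Rightarrow> gf4 mat" where
  "phi n x = mat (n+1) (n+1) (\<lambda>(i,j). \<Sum>g\<in>Sset n. bg (x g) * Nd (n+1) g $$ (i,j))"

lemma phi_carrier[simp]: "phi n x \<in> carrier_mat (n+1) (n+1)" by (simp add: phi_def)
lemma phi_dim[simp]: "dim_row (phi n x) = n+1" "dim_col (phi n x) = n+1" by (simp_all add: phi_def)

lemma phi_entry: assumes x: "x \<in> Aspace (transvD n)" and ij: "i < n+1" "j < n+1"
  shows "phi n x $$ (i,j) = (\<Sum>g\<in>transvD n. bg (x g) * Nd (n+1) g $$ (i,j))"
proof -
  have "phi n x $$ (i,j) = (\<Sum>g\<in>Sset n. bg (x g) * Nd (n+1) g $$ (i,j))" using ij by (simp add: phi_def)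
  also have "\<dots> = (\<Sum>g\<in>transvD n. bg (x g) * Nd (n+1) g $$ (i,j))"
    using x D_sub_S finite_S by (intro sum.mono_neutral_right) (auto simp: Aspace_def)
  finally show ?thesis .
qed

lemma phi_add: "phi n (Aadd x y) = phi n x + phi n y"
  unfolding phi_def Aadd_def bg_add distrib_right sum.distrib by (rule eq_matI) auto

lemma Aadd_A: "x \<in> Aspace D \<Longrightarrow> y \<in> Aspace D \<Longrightarrow> Aadd x y \<in> Aspace D"
  by (simp add: Aspace_def Aadd_def)

lemma Nd_conj[simp]: "d \<in> transvD n \<Longrightarrow> i < Suc n \<Longrightarrow> j < Suc n \<Longrightarrow>
  gf4_conj (Nd (Suc n) d $$ (i,j)) = Nd (Suc n) d $$ (j,i)"
  using su_conj[OF D_props(1), of d n i j] by simp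

lemma phi_su: assumes x: "x \<in> Aspace (transvD n)" shows "phi n x \<in> su (n+1)"
proof (rule suI)
  fix i j assume ij: "i < n+1" "j < n+1"
  have "gf4_conj (phi n x $$ (i,j)) = (\<Sum>g\<in>transvD n. bg (x g) * gf4_conj (Nd (n+1) g $$ (i,j)))"
    by (simp add: phi_entry[OF x ij] conj_sum)
  also have "\<dots> = (\<Sum>g\<in>transvD n. bg (x g) * Nd (n+1) g $$ (j,i))"
    using ij by (intro sum.cong) auto
  also have "\<dots> = phi n x $$ (j,i)" by (simp add: phi_entry[OF x ij(2,1)])
  finally show "phi n x $$ (j,i) = gf4_conj (phi n x $$ (i,j))" by simp
next
  have "(\<Sum>i<n+1. phi n x $$ (i,i)) = (\<Sum>i<n+1. \<Sum>g\<in>transvD n. bg (x g) * Nd (n+1) g $$ (i,i))"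
    by (intro sum.cong) (auto simp: phi_entry[OF x])
  also have "\<dots> = (\<Sum>g\<in>transvD n. bg (x g) * (\<Sum>i<n+1. Nd (n+1) g $$ (i,i)))"
    by (subst sum.swap) (simp only: sum_distrib_left)
  also have "\<dots> = 0" using suD(3)[OF D_props(1)] by (intro sum.neutral ballI) simp
  finally show "(\<Sum>i<n+1. phi n x $$ (i,i)) = 0" .
qed (rule phi_carrier)

definition delta :: "gf4 mat \<Rightarrow> gf4 mat \<Rightarrow> bit" where "delta g = (\<lambda>h. if h = g then 1 else 0)"

lemma delta_A: "g \<in> D \<Longrightarrow> delta g \<in> Aspace D" by (auto simp: Aspace_def delta_def)

lemma phi_delta: assumes g: "g \<in> transvD n" shows "phi n (delta g) = Nd (n+1) g"
proof (rule eq_matI)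
  fix i j assume "i < dim_row (Nd (n+1) g)" "j < dim_col (Nd (n+1) g)"
  then have ij: "i < n+1" "j < n+1" using suD(1)[OF D_props(1)[OF g]] by auto
  have "phi n (delta g) $$ (i,j) = (\<Sum>h\<in>transvD n. if h = g then Nd (n+1) g $$ (i,j) else 0)"
    unfolding phi_entry[OF delta_A[OF g] ij] by (intro sum.cong) (auto simp: delta_def)
  also have "\<dots> = Nd (n+1) g $$ (i,j)" using g finite_D by simp
  finally show "phi n (delta g) $$ (i,j) = Nd (n+1) g $$ (i,j)" .
qed (use suD(1)[OF D_props(1)[OF g]] in auto)


lemma bilin: fixes F :: "'g \<Rightarrow> gf4 mat" assumes fin: "finite D" and F: "\<And>d. d \<in> D \<Longrightarrow> F d \<in> carrier_mat N N" and ij: "i < N" "j < N"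
  shows "(\<Sum>k<N. (\<Sum>d\<in>D. a d * F d $$ (i,k)) * (\<Sum>e\<in>D. b e * F e $$ (k,j)))
        = (\<Sum>d\<in>D. \<Sum>e\<in>D. a d * b e * (F d * F e) $$ (i,j))"
proof -
  have "(\<Sum>k<N. (\<Sum>d\<in>D. a d * F d $$ (i,k)) * (\<Sum>e\<in>D. b e * F e $$ (k,j)))
      = (\<Sum>k<N. \<Sum>d\<in>D. \<Sum>e\<in>D. a d * F d $$ (i,k) * (b e * F e $$ (k,j)))"
    by (simp add: sum_product)
  also have "\<dots> = (\<Sum>d\<in>D. \<Sum>k<N. \<Sum>e\<in>D. a d * F d $$ (i,k) * (b e * F e $$ (k,j)))"
    by (rule sum.swap)
  also have "\<dots> = (\<Sum>d\<in>D. \<Sum>e\<in>D. \<Sum>k<N. a d * F d $$ (i,k) * (b e * F e $$ (k,j)))"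
    by (intro sum.cong refl) (rule sum.swap)
  also have "\<dots> = (\<Sum>d\<in>D. \<Sum>e\<in>D. \<Sum>k<N. (a d * b e) * (F d $$ (i,k) * F e $$ (k,j)))"
    by (intro sum.cong refl) (simp only: mult_ac)
  also have "\<dots> = (\<Sum>d\<in>D. \<Sum>e\<in>D. a d * b e * (F d * F e) $$ (i,j))"
    by (intro sum.cong refl) (simp only: mult_entry[OF F F ij] sum_distrib_left)
  finally show ?thesis .
qed

lemma sum_ofbool_eq: "finite S \<Longrightarrow> a \<in> S \<Longrightarrow> (\<Sum>g\<in>S. of_bool (g = a) * f g) = (f a :: gf4)"
proof -
  assume "finite S" "a \<in> S"
  have "(\<Sum>g\<in>S. of_bool (g = a) * f g) = (\<Sum>g\<in>S. if g = a then f a else 0)" by (intro sum.cong) auto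
  then show ?thesis using \<open>finite S\<close> \<open>a \<in> S\<close> by simp
qed

lemma keyS: assumes d: "d \<in> transvD n" and e: "e \<in> transvD n" and ij: "i < n+1" "j < n+1"
  shows "(\<Sum>g\<in>Sset n. bg (Abasis_prod d e g) * Nd (n+1) g $$ (i,j))
     = (Nd (n+1) d * Nd (n+1) e) $$ (i,j) + (Nd (n+1) e * Nd (n+1) d) $$ (i,j)"
proof (cases "d * e = e * d")
  case True
  then have "Nd (n+1) d * Nd (n+1) e = Nd (n+1) e * Nd (n+1) d" using pair_props(1)[OF d e] by simp
  then show ?thesis using True by (simp add: Abasis_prod_def)
next
  case False
  have dS: "d \<in> Sset n" and eS: "e \<in> Sset n" using d e D_sub_S by auto
  have edeS: "e * d * e \<in> Sset n" using ede_S[OF d e] .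
  have c: "Nd (n+1) d \<in> carrier_mat (n+1) (n+1)" "Nd (n+1) e \<in> carrier_mat (n+1) (n+1)"
     "Nd (n+1) (e*d*e) \<in> carrier_mat (n+1) (n+1)"
    using suD(1)[OF D_props(1)[OF d]] suD(1)[OF D_props(1)[OF e]]
    using D_props(4)[OF d] D_props(4)[OF e] by (auto simp: Nd_def)
  have "(\<Sum>g\<in>Sset n. bg (Abasis_prod d e g) * Nd (n+1) g $$ (i,j))
      = (\<Sum>g\<in>Sset n. of_bool (g = d) * Nd (n+1) g $$ (i,j)) + (\<Sum>g\<in>Sset n. of_bool (g = e) * Nd (n+1) g $$ (i,j))
        + (\<Sum>g\<in>Sset n. of_bool (g = e * d * e) * Nd (n+1) g $$ (i,j))"
    unfolding Abasis_prod_def if_P[OF False] bg_add bg_of_bool distrib_right sum.distrib by (rule refl)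
  also have "\<dots> = Nd (n+1) d $$ (i,j) + Nd (n+1) e $$ (i,j) + Nd (n+1) (e*d*e) $$ (i,j)"
    using finite_S dS eS edeS by (simp add: sum_ofbool_eq)
  also have "\<dots> = (Nd (n+1) d + Nd (n+1) e + Nd (n+1) (e*d*e)) $$ (i,j)"
    using c ij by simp
  also have "\<dots> = (Nd (n+1) d * Nd (n+1) e + Nd (n+1) e * Nd (n+1) d) $$ (i,j)"
    using ede_identity[OF d e False] by simp
  also have "\<dots> = (Nd (n+1) d * Nd (n+1) e) $$ (i,j) + (Nd (n+1) e * Nd (n+1) d) $$ (i,j)"
    using c ij by simp
  finally show ?thesis .
qed

lemma phi_prod_entry: assumes x: "x \<in> Aspace (transvD n)" and y: "y \<in> Aspace (transvD n)"
  and ij: "i < n+1" "j < n+1"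
  shows "(phi n x * phi n y) $$ (i,j) = (\<Sum>d\<in>transvD n. \<Sum>e\<in>transvD n. bg (x d) * bg (y e) * (Nd (n+1) d * Nd (n+1) e) $$ (i,j))"
proof -
  have "(phi n x * phi n y) $$ (i,j) = (\<Sum>k<n+1. phi n x $$ (i,k) * phi n y $$ (k,j))"
    by (rule mult_entry[OF phi_carrier phi_carrier ij])
  also have "\<dots> = (\<Sum>k<n+1. (\<Sum>d\<in>transvD n. bg (x d) * Nd (n+1) d $$ (i,k)) * (\<Sum>e\<in>transvD n. bg (y e) * Nd (n+1) e $$ (k,j)))"
    using ij by (intro sum.cong refl) (simp add: phi_entry[OF x] phi_entry[OF y])
  also have "\<dots> = (\<Sum>d\<in>transvD n. \<Sum>e\<in>transvD n. bg (x d) * bg (y e) * (Nd (n+1) d * Nd (n+1) e) $$ (i,j))"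
    by (rule bilin[OF finite_D suD(1)[OF D_props(1)] ij])
  finally show ?thesis .
qed


lemma sum_swap3: "(\<Sum>g\<in>S. \<Sum>d\<in>D. \<Sum>e\<in>E. f g d e) = (\<Sum>d\<in>D. \<Sum>e\<in>E. \<Sum>g\<in>S. f g d e)"
proof -
  have "(\<Sum>g\<in>S. \<Sum>d\<in>D. \<Sum>e\<in>E. f g d e) = (\<Sum>d\<in>D. \<Sum>g\<in>S. \<Sum>e\<in>E. f g d e)" by (rule sum.swap)
  also have "\<dots> = (\<Sum>d\<in>D. \<Sum>e\<in>E. \<Sum>g\<in>S. f g d e)" by (intro sum.cong refl) (rule sum.swap)
  finally show ?thesis .
qed

lemma phi_mult: assumes x: "x \<in> Aspace (transvD n)" and y: "y \<in> Aspace (transvD n)"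
  shows "phi n (Amult (transvD n) x y) = lie_bracket (phi n x) (phi n y)"
proof (rule eq_matI)
  let ?D = "transvD n"
  let ?M = "Nd (n+1)"
  fix i j assume "i < dim_row (lie_bracket (phi n x) (phi n y))" "j < dim_col (lie_bracket (phi n x) (phi n y))"
  then have ij: "i < n+1" "j < n+1" by (auto simp: lie_bracket_def)
  have "phi n (Amult ?D x y) $$ (i,j) = (\<Sum>g\<in>Sset n. bg (Amult ?D x y g) * ?M g $$ (i,j))"
    using ij by (simp add: phi_def)
  also have "\<dots> = (\<Sum>g\<in>Sset n. \<Sum>d\<in>?D. \<Sum>e\<in>?D. bg (x d) * bg (y e) * (bg (Abasis_prod d e g) * ?M g $$ (i,j)))"
    unfolding Amult_def bg_sum bg_mult sum_distrib_right mult.assoc by (rule refl)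
  also have "\<dots> = (\<Sum>d\<in>?D. \<Sum>e\<in>?D. \<Sum>g\<in>Sset n. bg (x d) * bg (y e) * (bg (Abasis_prod d e g) * ?M g $$ (i,j)))"
    by (rule sum_swap3)
  also have "\<dots> = (\<Sum>d\<in>?D. \<Sum>e\<in>?D. bg (x d) * bg (y e) * ((?M d * ?M e) $$ (i,j) + (?M e * ?M d) $$ (i,j)))"
    by (intro sum.cong refl) (simp only: sum_distrib_left[symmetric] keyS ij)
  also have "\<dots> = (\<Sum>d\<in>?D. \<Sum>e\<in>?D. bg (x d) * bg (y e) * (?M d * ?M e) $$ (i,j))
      + (\<Sum>d\<in>?D. \<Sum>e\<in>?D. bg (x d) * bg (y e) * (?M e * ?M d) $$ (i,j))"
    by (simp only: distrib_left sum.distrib)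
  also have "(\<Sum>d\<in>?D. \<Sum>e\<in>?D. bg (x d) * bg (y e) * (?M e * ?M d) $$ (i,j))
      = (\<Sum>e\<in>?D. \<Sum>d\<in>?D. bg (y e) * bg (x d) * (?M e * ?M d) $$ (i,j))"
    by (subst sum.swap) (simp only: mult.commute[of "bg (x _)" "bg (y _)"])
  also have "(\<Sum>d\<in>?D. \<Sum>e\<in>?D. bg (x d) * bg (y e) * (?M d * ?M e) $$ (i,j))
      + (\<Sum>e\<in>?D. \<Sum>d\<in>?D. bg (y e) * bg (x d) * (?M e * ?M d) $$ (i,j))
      = (phi n x * phi n y) $$ (i,j) + (phi n y * phi n x) $$ (i,j)"
    by (simp only: phi_prod_entry[OF x y ij] phi_prod_entry[OF y x ij])
  also have "\<dots> = lie_bracket (phi n x) (phi n y) $$ (i,j)"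
    using ij by (simp add: lie_bracket_def gf4_minus)
  finally show "phi n (Amult ?D x y) $$ (i,j) = lie_bracket (phi n x) (phi n y) $$ (i,j)" .
qed (auto simp: lie_bracket_def phi_def)

lemma phi_trace: assumes x: "x \<in> Aspace (transvD n)" and y: "y \<in> Aspace (transvD n)"
  shows "(\<Sum>i<n+1. (phi n x * phi n y) $$ (i,i)) = bg (Aform (transvD n) x y)"
proof -
  let ?D = "transvD n"
  let ?M = "Nd (n+1)"
  have "(\<Sum>i<n+1. (phi n x * phi n y) $$ (i,i))
     = (\<Sum>i<n+1. \<Sum>d\<in>?D. \<Sum>e\<in>?D. bg (x d) * bg (y e) * (?M d * ?M e) $$ (i,i))"
    by (intro sum.cong refl) (rule phi_prod_entry[OF x y]; simp)
  also have "\<dots> = (\<Sum>d\<in>?D. \<Sum>e\<in>?D. \<Sum>i<n+1. bg (x d) * bg (y e) * (?M d * ?M e) $$ (i,i))"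
    by (rule sum_swap3)
  also have "\<dots> = (\<Sum>d\<in>?D. \<Sum>e\<in>?D. bg (x d) * bg (y e) * of_bool (d * e \<noteq> e * d))"
    by (intro sum.cong refl) (simp only: sum_distrib_left[symmetric] pair_props(2))
  also have "\<dots> = bg (Aform ?D x y)"
    unfolding Aform_def bg_sum bg_mult bg_of_bool by (rule refl)
  finally show ?thesis .
qed


theorem lemma5p2:
  fixes n :: nat
  assumes "2 \<le> n"
  shows "alg_quot_iso
           (Aspace (transvD n)) Aadd (Amult (transvD n)) (Arad (transvD n))
           (g2 n) (+) lie_bracket (lie_center (n+1) (g2 n))"
proof -
  let ?D = "transvD n"
  let ?A = "Aspace ?D"
  let ?J = "lie_center (n+1) (g2 n)"
  have g2: "g2 n = su (n+1)" using g2_eq_su assms by simp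
  have img: "phi n x \<in> su (n+1)" if "x \<in> ?A" for x using phi_su[OF that] .
  have surj: "\<exists>x\<in>?A. X = phi n x" if X: "X \<in> su (n+1)" for X
  proof (rule su_span[OF _ _ _ X])
    show "2 \<le> n+1" using assms by simp
    show "\<exists>x\<in>?A. X + Y = phi n x" if "X \<in> carrier_mat (n+1) (n+1)" "Y \<in> carrier_mat (n+1) (n+1)"
      "\<exists>x\<in>?A. X = phi n x" "\<exists>x\<in>?A. Y = phi n x" for X Y
      using that(3,4) Aadd_A phi_add by metis
    show "\<exists>x\<in>?A. Gm (n+1) i j w = phi n x" if "i < n+1" "j < n+1" "i \<noteq> j" "w \<noteq> 0" for i j w
    proof
      have g: "1\<^sub>m (n+1) + Gm (n+1) i j w \<in> ?D" by (rule Gm_in_D[OF that])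
      show "delta (1\<^sub>m (n+1) + Gm (n+1) i j w) \<in> ?A" by (rule delta_A[OF g])
      show "Gm (n+1) i j w = phi n (delta (1\<^sub>m (n+1) + Gm (n+1) i j w))"
        unfolding phi_delta[OF g] Nd_Gm ..
    qed
  qed
  have zero_su: "0\<^sub>m (n+1) (n+1) \<in> su (n+1)" by (rule suI) auto
  have zero_J: "0\<^sub>m (n+1) (n+1) \<in> ?J"
    unfolding lie_center_def g2
    using zero_su bracket_zero_iff[of "0\<^sub>m (n+1) (n+1)" "n+1"] suD(1) by auto
  have addz: "X + 0\<^sub>m (n+1) (n+1) = X" if "X \<in> carrier_mat (n+1) (n+1)" for X :: "gf4 mat"
    by (rule eq_matI) (use that in auto)
  have cent: "phi n x \<in> ?J \<longleftrightarrow> x \<in> Arad ?D" if x: "x \<in> ?A" for x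
  proof -
    have "phi n x \<in> ?J \<longleftrightarrow> (\<forall>Y\<in>su (n+1). lie_bracket (phi n x) Y = 0\<^sub>m (n+1) (n+1))"
      unfolding lie_center_def g2 using img[OF x] by simp
    also have "\<dots> \<longleftrightarrow> (\<forall>Y\<in>su (n+1). (\<Sum>i<n+1. (phi n x * Y) $$ (i,i)) = 0)"
      by (rule center_iff[OF _ img[OF x]]) (use assms in simp)
    also have "\<dots> \<longleftrightarrow> (\<forall>y\<in>?A. (\<Sum>i<n+1. (phi n x * phi n y) $$ (i,i)) = 0)"
    proof (intro iffI ballI)
      fix y assume "\<forall>Y\<in>su (n+1). (\<Sum>i<n+1. (phi n x * Y) $$ (i,i)) = 0" "y \<in> ?A"
      then show "(\<Sum>i<n+1. (phi n x * phi n y) $$ (i,i)) = 0" using img by blast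
    next
      fix Y assume a: "\<forall>y\<in>?A. (\<Sum>i<n+1. (phi n x * phi n y) $$ (i,i)) = 0" and Y: "Y \<in> su (n+1)"
      obtain y where "y \<in> ?A" "Y = phi n y" using surj[OF Y] by blast
      then show "(\<Sum>i<n+1. (phi n x * Y) $$ (i,i)) = 0" using a by blast
    qed
    also have "\<dots> \<longleftrightarrow> (\<forall>y\<in>?A. Aform ?D x y = 0)"
      using phi_trace[OF x] bg_eq0 by simp
    also have "\<dots> \<longleftrightarrow> x \<in> Arad ?D" using x by (simp add: Arad_def)
    finally show ?thesis .
  qed
  show ?thesis
    unfolding alg_quot_iso_def
  proof (intro exI[of _ "phi n"] conjI ballI)
    fix x assume x: "x \<in> ?A"
    show "phi n x \<in> g2 n" using img[OF x] g2 by simp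
    show "phi n x \<in> ?J \<longleftrightarrow> x \<in> Arad ?D" by (rule cent[OF x])
    fix y assume y: "y \<in> ?A"
    show "phi n (Aadd x y) = phi n x + phi n y" by (rule phi_add)
    show "\<exists>z\<in>?J. phi n (Amult ?D x y) = lie_bracket (phi n x) (phi n y) + z"
    proof
      show "0\<^sub>m (n+1) (n+1) \<in> ?J" by (rule zero_J)
      have "lie_bracket (phi n x) (phi n y) \<in> carrier_mat (n+1) (n+1)"
        using suD(1)[OF su_bracket[OF img[OF x] img[OF y]]] .
      then show "phi n (Amult ?D x y) = lie_bracket (phi n x) (phi n y) + 0\<^sub>m (n+1) (n+1)"
        using phi_mult[OF x y] addz by simp
    qed
  next
    fix b assume b: "b \<in> g2 n"
    then obtain x where x: "x \<in> ?A" "b = phi n x" using surj g2 by auto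
    show "\<exists>x\<in>?A. \<exists>z\<in>?J. b = phi n x + z"
      using x zero_J addz[OF phi_carrier] by metis
  qed
qed

end
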